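(* Let $r_n$ be the number of recursively labelled red and white trees with $n$ labels, and $F(x)=\sum_{n\ge1}r_nx^n$. Then $F=x+2xF+2F^2$. (The first values are $1,4,24,176,1440,\dots$.)
   Context: A labelled red and white tree with $n$ labels is a finite rooted tree (children unordered) in which each node $z$ carries a possibly empty label set $L(z)\subseteq[n]$, the sets $L(z)$ partitioning $[n]$, and every node with empty label set has at least two children; colours (red/white) are determined by these data (a labelled node is white, an empty node is red iff all its children are white) and do not affect counting. It is recursively labelled if for every node $z$ the union of the label sets of the nodes of the subtree rooted at $z$ is an interval of consecutive integers. *)

theory Defs
  imports "HOL-Library.Multiset" "HOL-Computational_Algebra.Formal_Power_Series"
begin

text \<open>A rooted tree with unordered children; each node carries a label set.
  Colours are determined by the data and are irrelevant for counting, so they are omitted.\<close>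
datatype rwtree = Node "nat set" "rwtree multiset"

lemma size_mem_lt_size_multiset [termination_simp]:
  "x \<in># M \<Longrightarrow> f x < Suc (size_multiset f M)"
  proof -
  assume "x \<in># M"
  then obtain N where "M = add_mset x N" by (metis insert_DiffM)
  then show ?thesis by simp
qed

fun labels :: "rwtree \<Rightarrow> nat set" where
  "labels (Node L cs) = L \<union> (\<Union>c\<in>set_mset cs. labels c)"

fun wf_rwtree :: "rwtree \<Rightarrow> bool" where
  "wf_rwtree (Node L cs) =
     ((L = {} \<longrightarrow> size cs \<ge> 2) \<and>
      (\<forall>c\<in>set_mset cs. wf_rwtree c \<and> L \<inter> labels c = {}) \<and>
      (\<forall>a b M. cs = {#a, b#} + M \<longrightarrow> labels a \<inter> labels b = {}))"

fun rec_labelled :: "rwtree \<Rightarrow> bool" where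
  "rec_labelled (Node L cs) =
     ((\<exists>a b. labels (Node L cs) = {a..b}) \<and> (\<forall>c\<in>set_mset cs. rec_labelled c))"

definition rw_trees :: "nat \<Rightarrow> rwtree set" where
  "rw_trees n = {t. wf_rwtree t \<and> labels t = {1..n}}"

definition r :: "nat \<Rightarrow> nat" where
  "r n = card {t \<in> rw_trees n. rec_labelled t}"

end

theory Submission
  imports Defs
begin


definition good :: "rwtree \<Rightarrow> bool" where "good t = (wf_rwtree t \<and> rec_labelled t)"
definition TT :: "nat set \<Rightarrow> rwtree set" where "TT I = {t. good t \<and> labels t = I}"
definition okc :: "nat set \<Rightarrow> rwtree multiset \<Rightarrow> bool" where
  "okc L cs = ((\<forall>c\<in>#cs. good c \<and> L \<inter> labels c = {}) \<and>
     (\<forall>x\<in>#cs. \<forall>y\<in>#cs - {#x#}. labels x \<inter> labels y = {}))"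
definition lab :: "nat set \<Rightarrow> rwtree multiset \<Rightarrow> nat set" where
  "lab L cs = L \<union> (\<Union>c\<in>set_mset cs. labels c)"
definition Str :: "nat set \<Rightarrow> (nat set \<times> rwtree multiset) set" where
  "Str I = {(L,cs). okc L cs \<and> lab L cs = I}"

lemma pw_iff: "(\<forall>a b M. cs = {#a, b#} + M \<longrightarrow> P a b) \<longleftrightarrow> (\<forall>x\<in>#cs. \<forall>y\<in>#cs - {#x#}. P x y)"
proof
  assume H: "\<forall>a b M. cs = {#a, b#} + M \<longrightarrow> P a b"
  show "\<forall>x\<in>#cs. \<forall>y\<in>#cs - {#x#}. P x y"
  proof (intro ballI)
    fix x y assume x: "x \<in># cs" and y: "y \<in># cs - {#x#}"
    have 1: "cs = add_mset x (cs - {#x#})" using x by (simp add: insert_DiffM)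
    have 2: "cs - {#x#} = add_mset y (cs - {#x#} - {#y#})" using y by (metis insert_DiffM)
    have "cs = {#x, y#} + (cs - {#x#} - {#y#})"
      using 1 2 by simp
    then show "P x y" using H by blast
  qed
next
  assume H: "\<forall>x\<in>#cs. \<forall>y\<in>#cs - {#x#}. P x y"
  show "\<forall>a b M. cs = {#a, b#} + M \<longrightarrow> P a b"
  proof (intro allI impI)
    fix a b M assume "cs = {#a, b#} + M"
    then show "P a b" using H by auto
  qed
qed

lemma labels_Node: "labels (Node L cs) = lab L cs" by (simp add: lab_def)

lemma good_Node: "good (Node L cs) \<longleftrightarrow> (L = {} \<longrightarrow> 2 \<le> size cs) \<and> okc L cs \<and> (\<exists>a b. lab L cs = {a..b})"
  unfolding good_def okc_def lab_def
  by (simp only: wf_rwtree.simps rec_labelled.simps pw_iff) auto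

lemma wf_nonempty: "wf_rwtree t \<Longrightarrow> labels t \<noteq> {}"
proof (induction t)
  case (Node L cs)
  show ?case
  proof (cases "L = {}")
    case True
    with Node.prems have "size cs \<ge> 2" by simp
    then have "cs \<noteq> {#}" by auto
    then obtain c where c: "c \<in># cs" by (metis all_not_in_conv set_mset_eq_empty_iff)
    with Node have "labels c \<noteq> {}" by simp
    with c show ?thesis by auto
  qed simp
qed

lemma good_nonempty: "good t \<Longrightarrow> labels t \<noteq> {}"
  using wf_nonempty good_def by blast

lemma TT_empty: "TT {} = {}"
  using good_nonempty by (auto simp: TT_def)

fun sh :: "nat \<Rightarrow> rwtree \<Rightarrow> rwtree" where
  "sh d (Node L cs) = Node ((+) d ` L) (image_mset (sh d) cs)"
fun unsh :: "nat \<Rightarrow> rwtree \<Rightarrow> rwtree" where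
  "unsh d (Node L cs) = Node ((\<lambda>x. x - d) ` L) (image_mset (unsh d) cs)"

lemma labels_sh: "labels (sh d t) = (+) d ` labels t"
  by (induction t) (auto simp: image_Union)

lemma unsh_sh: "unsh d (sh d t) = t"
proof (induction t)
  case (Node L cs)
  have "image_mset (unsh d \<circ> sh d) cs = cs"
    by (rule multiset.map_ident_strong) (use Node in auto)
  then show ?case by (simp add: image_image multiset.map_comp)
qed

lemma sh_unsh: "\<forall>x\<in>labels t. d \<le> x \<Longrightarrow> sh d (unsh d t) = t"
proof (induction t)
  case (Node L cs)
  have "image_mset (sh d \<circ> unsh d) cs = cs"
    by (rule multiset.map_ident_strong) (use Node in auto)
  moreover have "(+) d ` (\<lambda>x. x - d) ` L = L"
    using Node.prems by (force simp: image_image)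
  ultimately show ?case by (simp add: multiset.map_comp)
qed

lemma img_add_Int: "(+) (d::nat) ` A \<inter> (+) d ` B = (+) d ` (A \<inter> B)"
  by (auto)

lemma wf_sh: "wf_rwtree (sh d t) = wf_rwtree t"
proof (induction t)
  case (Node L cs)
  have e: "image_mset (sh d) cs - {#sh d x#} = image_mset (sh d) (cs - {#x#})" if "x \<in># cs" for x
    using that by (simp add: image_mset_Diff)
  have "(\<forall>x\<in>#image_mset (sh d) cs. \<forall>y\<in>#image_mset (sh d) cs - {#x#}. labels x \<inter> labels y = {})
     \<longleftrightarrow> (\<forall>x\<in>#cs. \<forall>y\<in>#cs - {#x#}. labels x \<inter> labels y = {})"
    by (auto simp: e labels_sh img_add_Int)
  moreover have "(\<forall>c\<in>#image_mset (sh d) cs. wf_rwtree c \<and> (+) d ` L \<inter> labels c = {})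
     \<longleftrightarrow> (\<forall>c\<in>#cs. wf_rwtree c \<and> L \<inter> labels c = {})"
    using Node.IH by (auto simp: labels_sh img_add_Int)
  ultimately show ?case by (simp only: sh.simps wf_rwtree.simps pw_iff size_image_mset image_is_empty)
qed

lemma interval_img: "(\<exists>a b. (+) (d::nat) ` S = {a..b}) \<longleftrightarrow> (\<exists>a b. S = {a..b})"
proof
  assume "\<exists>a b. (+) d ` S = {a..b}"
  then obtain a b where ab: "(+) d ` S = {a..b}" by blast
  show "\<exists>a b. S = {a..b}"
  proof (cases "S = {}")
    case True then show ?thesis by (intro exI[of _ 1] exI[of _ 0]) auto
  next
    case False
    then have "a \<le> b" using ab by fastforce
    then have "a \<in> (+) d ` S" using ab by auto
    then have "d \<le> a" by auto
    have "S = {a - d..b - d}"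
    proof safe
      fix x assume "x \<in> S" then have "d + x \<in> {a..b}" using ab by blast
      then show "x \<in> {a-d..b-d}" by auto
    next
      fix x assume "x \<in> {a-d..b-d}"
      then have "d + x \<in> {a..b}" using \<open>d \<le> a\<close> \<open>a \<le> b\<close> by auto
      then show "x \<in> S" using ab by (metis add_left_imp_eq image_iff)
    qed
    then show ?thesis by blast
  qed
next
  assume "\<exists>a b. S = {a..b}"
  then obtain a b where "S = {a..b}" by blast
  then have "(+) d ` S = {a + d..b + d}" by simp
  then show "\<exists>a b. (+) d ` S = {a..b}" by blast
qed

lemma rec_sh: "rec_labelled (sh d t) = rec_labelled t"
proof (induction t)
  case (Node L cs)
  have "labels (sh d (Node L cs)) = (+) d ` labels (Node L cs)" by (rule labels_sh)
  then have "(\<exists>a b. labels (sh d (Node L cs)) = {a..b}) = (\<exists>a b. labels (Node L cs) = {a..b})"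
    using interval_img by metis
  then show ?case using Node.IH by (simp del: labels.simps)
qed

lemma good_sh: "good (sh d t) = good t"
  by (simp add: good_def wf_sh rec_sh)

lemma card_TT_shift: "card (TT {d+x..d+y}) = card (TT {x..y})"
proof -
  have "bij_betw (sh d) (TT {x..y}) (TT {d+x..d+y})"
  proof (rule bij_betw_byWitness[where f'="unsh d"])
    show "\<forall>a\<in>TT {x..y}. unsh d (sh d a) = a" by (simp add: unsh_sh)
    show "\<forall>a'\<in>TT {d + x..d + y}. sh d (unsh d a') = a'"
      by (auto simp: TT_def intro!: sh_unsh)
    show "sh d ` TT {x..y} \<subseteq> TT {d + x..d + y}"
      by (auto simp: TT_def good_sh labels_sh add.commute)
    show "unsh d ` TT {d + x..d + y} \<subseteq> TT {x..y}"
    proof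
      fix s assume "s \<in> unsh d ` TT {d + x..d + y}"
      then obtain t where t: "t \<in> TT {d+x..d+y}" and s: "s = unsh d t" by blast
      have ts: "t = sh d s" using t s by (auto simp: TT_def intro!: sh_unsh[symmetric])
      have "good s" using t ts good_sh by (auto simp: TT_def)
      moreover have "labels s = {x..y}"
      proof -
        have "(+) d ` labels s = (+) d ` {x..y}"
        using t ts by (auto simp: TT_def labels_sh add.commute)
      then show "labels s = {x..y}" by (meson inj_image_eq_iff inj_on_add)
      qed
      ultimately show "s \<in> TT {x..y}" by (simp add: TT_def)
    qed
  qed
  then show ?thesis by (simp add: bij_betw_same_card)
qed



fun dest :: "rwtree \<Rightarrow> nat set \<times> rwtree multiset" where "dest (Node L cs) = (L, cs)"

definition StrP :: "nat set \<Rightarrow> (nat set \<times> rwtree multiset) set" where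
  "StrP J = {p \<in> Str J. fst p = {} \<longrightarrow> 2 \<le> size (snd p)}"

lemma bij_StrP: "bij_betw (\<lambda>(L,cs). Node L cs) (StrP {x..y}) (TT {x..y})"
proof (rule bij_betw_byWitness[where f'=dest])
  show "\<forall>a\<in>StrP {x..y}. dest (case a of (L, cs) \<Rightarrow> Node L cs) = a" by auto
  show "\<forall>a'\<in>TT {x..y}. (case dest a' of (L, cs) \<Rightarrow> Node L cs) = a'"
    by (metis dest.elims old.prod.case)
  show "(\<lambda>(L, cs). Node L cs) ` StrP {x..y} \<subseteq> TT {x..y}"
  proof
    fix t assume "t \<in> (\<lambda>(L, cs). Node L cs) ` StrP {x..y}"
    then obtain L cs where t: "t = Node L cs" and p: "(L,cs) \<in> StrP {x..y}" by auto
    then have "okc L cs" "lab L cs = {x..y}" "L = {} \<longrightarrow> 2 \<le> size cs"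
      by (auto simp: StrP_def Str_def)
    then have "good (Node L cs)" "labels (Node L cs) = {x..y}"
      unfolding good_Node labels_Node by blast+
    then show "t \<in> TT {x..y}" using t by (simp add: TT_def del: labels.simps)
  qed
  show "dest ` TT {x..y} \<subseteq> StrP {x..y}"
  proof
    fix p assume "p \<in> dest ` TT {x..y}"
    then obtain t where t: "t \<in> TT {x..y}" "p = dest t" by blast
    obtain L cs where "t = Node L cs" by (cases t)
    with t have "Node L cs \<in> TT {x..y}" "p = (L, cs)" by auto
    then show "p \<in> StrP {x..y}" by (auto simp del: labels.simps simp: StrP_def Str_def TT_def good_Node labels_Node)
  qed
qed

lemma Str_split: "Str J = StrP J \<union> (\<lambda>t. ({}, {#t#})) ` TT J \<union> (if J = {} then {({}, {#})} else {})"
proof (intro equalityI subsetI)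
  fix p assume p: "p \<in> Str J"
  obtain L cs where pe: "p = (L, cs)" by fastforce
  show "p \<in> StrP J \<union> (\<lambda>t. ({}, {#t#})) ` TT J \<union> (if J = {} then {({}, {#})} else {})"
  proof (cases "L = {} \<and> size cs < 2")
    case False then show ?thesis using p pe by (auto simp: StrP_def)
  next
    case True
    then have "size cs = 0 \<or> size cs = 1" by linarith
    then show ?thesis
    proof
      assume "size cs = 0" then show ?thesis using p pe True by (auto simp: Str_def lab_def)
    next
      assume "size cs = 1"
      then obtain c where "cs = {#c#}" using size_1_singleton_mset by blast
      then show ?thesis using p pe True by (auto simp: Str_def lab_def okc_def TT_def)
    qed
  qed
next
  fix p assume "p \<in> StrP J \<union> (\<lambda>t. ({}, {#t#})) ` TT J \<union> (if J = {} then {({}, {#})} else {})"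
  then show "p \<in> Str J"
    by (auto simp: StrP_def Str_def lab_def okc_def TT_def split: if_splits)
qed

lemma card_Str: assumes "finite (TT {x..y})"
  shows "finite (Str {x..y}) \<and> card (Str {x..y}) = 2 * card (TT {x..y}) + (if y < x then 1 else 0)"
proof -
  let ?J = "{x..y}"
  have fP: "finite (StrP ?J)" and cP: "card (StrP ?J) = card (TT ?J)"
    using bij_StrP assms bij_betw_finite bij_betw_same_card by blast+
  have inj: "inj (\<lambda>t. ({}::nat set, {#t#}))" by (auto simp: inj_def)
  let ?I = "(\<lambda>t. ({}::nat set, {#t#})) ` TT ?J"
  have cI: "card ?I = card (TT ?J)" by (rule card_image[OF inj_on_subset[OF inj subset_UNIV]])
  let ?E = "(if ?J = {} then {({}::nat set, {#}::rwtree multiset)} else {})"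
  have d1: "StrP ?J \<inter> ?I = {}" by (auto simp: StrP_def)
  have d2: "(StrP ?J \<union> ?I) \<inter> ?E = {}" by (auto simp: StrP_def Str_def lab_def)
  have fin: "finite (StrP ?J \<union> ?I)" using fP assms by simp
  have "card (Str ?J) = card (StrP ?J \<union> ?I) + card ?E"
    by (subst Str_split) (rule card_Un_disjoint[OF fin _ d2], simp)
  also have "card (StrP ?J \<union> ?I) = card (StrP ?J) + card ?I"
    using card_Un_disjoint[OF fP _ d1] assms by simp
  finally have "card (Str ?J) = 2 * card (TT ?J) + (if y < x then 1 else 0)"
    using cP cI by simp
  moreover have "finite (Str ?J)" using fin by (subst Str_split) simp
  ultimately show ?thesis by blast
qed



lemma okc_remove:
  assumes "okc L cs" "c \<in># cs"
  shows "okc L (cs - {#c#})" and "lab L cs = labels c \<union> lab L (cs - {#c#})"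
    and "labels c \<inter> lab L (cs - {#c#}) = {}"
proof -
  have pw: "\<forall>x\<in>#cs. \<forall>y\<in>#cs - {#x#}. labels x \<inter> labels y = {}"
    and ch: "\<forall>c\<in>#cs. good c \<and> L \<inter> labels c = {}" using assms(1) by (auto simp: okc_def)
  show "okc L (cs - {#c#})"
    unfolding okc_def
  proof (rule conjI)
    show "\<forall>x\<in>#cs - {#c#}. good x \<and> L \<inter> labels x = {}" using ch by (meson in_diffD)
    show "\<forall>x\<in>#cs - {#c#}. \<forall>y\<in>#cs - {#c#} - {#x#}. labels x \<inter> labels y = {}"
    proof (intro ballI)
      fix x y assume x: "x \<in># cs - {#c#}" and y: "y \<in># cs - {#c#} - {#x#}"
      have "y \<in># cs - {#x#}" using y by (metis diff_right_commute in_diffD)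
      then show "labels x \<inter> labels y = {}" using pw x by (meson in_diffD)
    qed
  qed
  have s: "set_mset cs = insert c (set_mset (cs - {#c#}))"
    using assms(2) by (metis insert_DiffM set_mset_add_mset_insert)
  then show "lab L cs = labels c \<union> lab L (cs - {#c#})" by (auto simp: lab_def)
  show "labels c \<inter> lab L (cs - {#c#}) = {}"
    using pw assms(2) ch by (fastforce simp: lab_def)
qed

lemma okc_add:
  assumes "okc L cs" "good c" "L \<inter> labels c = {}" "\<forall>y\<in>#cs. labels c \<inter> labels y = {}"
  shows "okc L (add_mset c cs)"
  unfolding okc_def
proof (intro conjI)
  show "\<forall>x\<in>#add_mset c cs. good x \<and> L \<inter> labels x = {}" using assms by (auto simp: okc_def)
next
  show "\<forall>x\<in>#add_mset c cs. \<forall>y\<in>#add_mset c cs - {#x#}. labels x \<inter> labels y = {}"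
  proof (intro ballI)
  fix x y assume x: "x \<in># add_mset c cs" and y: "y \<in># add_mset c cs - {#x#}"
  show "labels x \<inter> labels y = {}"
  proof (cases "x = c")
    case True then show ?thesis using y assms(4) by simp
  next
    case False
    then have xc: "x \<in># cs" using x by simp
    have "add_mset c cs - {#x#} = add_mset c (cs - {#x#})" using False by simp
    then have "y = c \<or> y \<in># cs - {#x#}" using y by simp
    then show ?thesis
    proof
      assume "y = c" then show ?thesis using assms(4) xc by blast
    next
      assume "y \<in># cs - {#x#}"
      moreover have "\<forall>x\<in>#cs. \<forall>y\<in>#cs - {#x#}. labels x \<inter> labels y = {}"
        using assms(1) by (simp add: okc_def)
      ultimately show ?thesis using xc by blast
    qed
  qed
  qed
qed

definition TA :: "nat \<Rightarrow> nat \<Rightarrow> rwtree set" where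
  "TA a b = {t \<in> TT {a..b}. a \<in> fst (dest t)}"
definition TB :: "nat \<Rightarrow> nat \<Rightarrow> rwtree set" where
  "TB a b = {t \<in> TT {a..b}. a \<notin> fst (dest t)}"

lemma TT_Node: "Node L cs \<in> TT I \<longleftrightarrow> (L = {} \<longrightarrow> 2 \<le> size cs) \<and> okc L cs \<and> (\<exists>a b. lab L cs = {a..b}) \<and> lab L cs = I"
  by (simp add: TT_def good_Node labels_Node del: labels.simps)

lemma bij_TA: assumes "a \<le> b"
  shows "bij_betw (\<lambda>t. (fst (dest t) - {a}, snd (dest t))) (TA a b) (Str {Suc a..b})"
proof (rule bij_betw_byWitness[where f'="\<lambda>(L,cs). Node (insert a L) cs"])
  show "\<forall>t\<in>TA a b. (case (fst (dest t) - {a}, snd (dest t)) of (L, cs) \<Rightarrow> Node (insert a L) cs) = t"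
  proof
    fix t assume t: "t \<in> TA a b"
    obtain L' cs' where "t = Node L' cs'" by (cases t)
    then show "(case (fst (dest t) - {a}, snd (dest t)) of (L, cs) \<Rightarrow> Node (insert a L) cs) = t"
      using t by (auto simp: TA_def insert_absorb)
  qed
  show "\<forall>p\<in>Str {Suc a..b}. (fst (dest (case p of (L, cs) \<Rightarrow> Node (insert a L) cs)) - {a},
          snd (dest (case p of (L, cs) \<Rightarrow> Node (insert a L) cs))) = p"
  proof
    fix p assume p: "p \<in> Str {Suc a..b}"
    obtain L' cs' where pe: "p = (L', cs')" by fastforce
    have "L' \<subseteq> {Suc a..b}" using p pe by (auto simp: Str_def lab_def)
    then have "a \<notin> L'" by auto
    then show "(fst (dest (case p of (L, cs) \<Rightarrow> Node (insert a L) cs)) - {a},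
          snd (dest (case p of (L, cs) \<Rightarrow> Node (insert a L) cs))) = p" using pe by simp
  qed
  show "(\<lambda>t. (fst (dest t) - {a}, snd (dest t))) ` TA a b \<subseteq> Str {Suc a..b}"
  proof
    fix p assume "p \<in> (\<lambda>t. (fst (dest t) - {a}, snd (dest t))) ` TA a b"
    then obtain t where t: "t \<in> TA a b" "p = (fst (dest t) - {a}, snd (dest t))" by blast
    obtain L cs where tn: "t = Node L cs" by (cases t)
    have k: "okc L cs" "lab L cs = {a..b}" "a \<in> L" using t tn by (auto simp: TA_def TT_Node)
    have "okc (L - {a}) cs" using k(1) by (auto simp: okc_def)
    moreover have "lab (L - {a}) cs = {Suc a..b}"
    proof -
      have "\<forall>c\<in>#cs. a \<notin> labels c" using k(1,3) by (auto simp: okc_def)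
      then have "lab (L - {a}) cs = lab L cs - {a}" by (auto simp: lab_def)
      then show ?thesis using k(2) by auto
    qed
    ultimately show "p \<in> Str {Suc a..b}" using t tn by (simp add: Str_def)
  qed
  show "(\<lambda>(L, cs). Node (insert a L) cs) ` Str {Suc a..b} \<subseteq> TA a b"
  proof
    fix t assume "t \<in> (\<lambda>(L, cs). Node (insert a L) cs) ` Str {Suc a..b}"
    then obtain L cs where t: "t = Node (insert a L) cs" and p: "(L,cs) \<in> Str {Suc a..b}" by auto
    have k: "okc L cs" "lab L cs = {Suc a..b}" using p by (auto simp: Str_def)
    have "\<forall>c\<in>#cs. labels c \<subseteq> {Suc a..b}" using k(2) by (auto simp: lab_def)
    then have "\<forall>c\<in>#cs. a \<notin> labels c" by fastforce
    then have "okc (insert a L) cs" using k(1) unfolding okc_def by auto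
    moreover have "lab (insert a L) cs = {a..b}" using k(2) assms by (auto simp: lab_def)
    ultimately show "t \<in> TA a b" using t by (auto simp: TA_def TT_Node)
  qed
qed


lemma rec_interval: "rec_labelled t \<Longrightarrow> \<exists>x y. labels t = {x..y}"
  by (metis rec_labelled.elims(2))


definition U :: "nat \<Rightarrow> nat \<Rightarrow> (rwtree \<times> nat set \<times> rwtree multiset) set" where
  "U a b = (\<Union>m\<in>{a..<b}. TT {a..m} \<times> Str {Suc m..b})"
definition pick :: "nat \<Rightarrow> rwtree multiset \<Rightarrow> rwtree" where
  "pick a cs = (SOME c. c \<in># cs \<and> a \<in> labels c)"
definition fB :: "nat \<Rightarrow> rwtree \<Rightarrow> rwtree \<times> nat set \<times> rwtree multiset" where
  "fB a t = (case dest t of (L,cs) \<Rightarrow> (pick a cs, (L, cs - {#pick a cs#})))"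
definition gB :: "rwtree \<times> nat set \<times> rwtree multiset \<Rightarrow> rwtree" where
  "gB u = (case u of (c,(L,cs)) \<Rightarrow> Node L (add_mset c cs))"

lemma TB_facts:
  assumes t: "Node L cs \<in> TB a b" and ab: "a \<le> b"
  shows "pick a cs \<in># cs \<and> (\<exists>m. a \<le> m \<and> m < b \<and> pick a cs \<in> TT {a..m} \<and>
           (L, cs - {#pick a cs#}) \<in> Str {Suc m..b})"
proof -
  have k: "L = {} \<longrightarrow> 2 \<le> size cs" "okc L cs" "lab L cs = {a..b}" "a \<notin> L"
    using t by (auto simp: TB_def TT_Node)
  have "a \<in> lab L cs" using k(3) ab by auto
  then have "\<exists>c. c \<in># cs \<and> a \<in> labels c" using k(4) by (auto simp: lab_def)
  then have c: "pick a cs \<in># cs \<and> a \<in> labels (pick a cs)" unfolding pick_def by (rule someI_ex)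
  define c where "c = pick a cs"
  have cin: "c \<in># cs" and ac: "a \<in> labels c" using c c_def by auto
  have gc: "good c" using k(2) cin by (auto simp: okc_def)
  have rem: "okc L (cs - {#c#})" "lab L cs = labels c \<union> lab L (cs - {#c#})"
     "labels c \<inter> lab L (cs - {#c#}) = {}" using okc_remove[OF k(2) cin] by auto
  obtain x y where xy: "labels c = {x..y}" using gc rec_interval good_def by blast
  have sub: "labels c \<subseteq> {a..b}" using rem(2) k(3) by blast
  have "x \<le> a" "a \<le> y" using ac xy by auto
  then have "x \<in> labels c" "y \<in> labels c" using xy by auto
  then have "x = a" "y \<le> b" using sub \<open>x \<le> a\<close> by auto
  have "lab L (cs - {#c#}) = lab L cs - labels c" using rem(2,3) by blast
  then have R: "lab L (cs - {#c#}) = {a..b} - {a..y}" using k(3) xy \<open>x = a\<close> by simp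
  have "y \<noteq> b"
  proof
    assume "y = b"
    then have R0: "lab L (cs - {#c#}) = {}" using R by simp
    then have "L = {}" by (simp add: lab_def)
    have "cs - {#c#} = {#}"
    proof (rule ccontr)
      assume "cs - {#c#} \<noteq> {#}"
      then obtain d where d: "d \<in># cs - {#c#}" by (metis all_not_in_conv set_mset_eq_empty_iff)
      then have "good d" using rem(1) by (auto simp: okc_def)
      then have "labels d \<noteq> {}" by (rule good_nonempty)
      then show False using R0 d by (auto simp: lab_def)
    qed
    then have "size cs = 1" using cin by (metis insert_DiffM size_single)
    then show False using k(1) \<open>L = {}\<close> by simp
  qed
  then have "y < b" using \<open>y \<le> b\<close> by simp
  moreover have "c \<in> TT {a..y}" using gc xy \<open>x = a\<close> by (simp add: TT_def)
  moreover have "(L, cs - {#c#}) \<in> Str {Suc y..b}"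
  proof -
    have "{a..b} - {a..y} = {Suc y..b}" using \<open>a \<le> y\<close> by auto
    then show ?thesis using rem(1) R by (simp add: Str_def)
  qed
  ultimately have "\<exists>m. a \<le> m \<and> m < b \<and> c \<in> TT {a..m} \<and> (L, cs - {#c#}) \<in> Str {Suc m..b}"
    using \<open>a \<le> y\<close> by blast
  then show ?thesis using cin by (simp only: c_def)
qed

lemma U_facts:
  assumes u: "(c, L, cs) \<in> U a b"
  shows "Node L (add_mset c cs) \<in> TB a b \<and> pick a (add_mset c cs) = c"
proof -
  obtain m where m: "a \<le> m" "m < b" "c \<in> TT {a..m}" "(L, cs) \<in> Str {Suc m..b}"
    using u by (auto simp: U_def)
  have k: "okc L cs" "lab L cs = {Suc m..b}" using m(4) by (auto simp: Str_def)
  have gc: "good c" "labels c = {a..m}" using m(3) by (auto simp: TT_def)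
  have Lsub: "L \<subseteq> {Suc m..b}" using k(2) by (auto simp: lab_def)
  have csub: "\<forall>y\<in>#cs. labels y \<subseteq> {Suc m..b}" using k(2) by (auto simp: lab_def)
  have ok: "okc L (add_mset c cs)"
  proof (rule okc_add[OF k(1) gc(1)])
    show "L \<inter> labels c = {}" using Lsub gc(2) by auto
    show "\<forall>y\<in>#cs. labels c \<inter> labels y = {}"
    proof
      fix y assume "y \<in># cs"
      then have "labels y \<subseteq> {Suc m..b}" using csub by blast
      then show "labels c \<inter> labels y = {}" using gc(2) by auto
    qed
  qed
  have "lab L (add_mset c cs) = labels c \<union> lab L cs" by (auto simp: lab_def)
  also have "\<dots> = {a..m} \<union> {Suc m..b}" using k(2) gc(2) by simp
  also have "\<dots> = {a..b}" using m(1,2) by auto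
  finally have lab: "lab L (add_mset c cs) = {a..b}" .
  have sz: "L = {} \<longrightarrow> 2 \<le> size (add_mset c cs)"
  proof
    assume "L = {}"
    have "cs \<noteq> {#}"
    proof
      assume "cs = {#}" then have "lab L cs = {}" using \<open>L = {}\<close> by (simp add: lab_def)
      then show False using k(2) m(2) by auto
    qed
    then show "2 \<le> size (add_mset c cs)" by (simp add: Suc_le_eq nonempty_has_size)
  qed
  have aL: "a \<notin> L" using Lsub m(1) by auto
  have "Node L (add_mset c cs) \<in> TB a b"
    using ok lab sz aL by (auto simp: TB_def TT_Node)
  moreover have "pick a (add_mset c cs) = c"
    unfolding pick_def
  proof (rule some_equality)
    show "c \<in># add_mset c cs \<and> a \<in> labels c" using gc(2) m(1) by auto
    fix d assume d: "d \<in># add_mset c cs \<and> a \<in> labels d"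
    show "d = c"
    proof (rule ccontr)
      assume "d \<noteq> c"
      then have "d \<in># cs" using d by auto
      then have "labels d \<subseteq> {Suc m..b}" using csub by blast
      then show False using d m(1) by auto
    qed
  qed
  ultimately show ?thesis by blast
qed

lemma bij_TB: assumes "a \<le> b" shows "bij_betw (fB a) (TB a b) (U a b)"
proof (rule bij_betw_byWitness[where f'=gB])
  show "\<forall>t\<in>TB a b. gB (fB a t) = t"
  proof
    fix t assume t: "t \<in> TB a b"
    obtain L' cs' where te: "t = Node L' cs'" by (cases t)
    have "pick a cs' \<in># cs'" using TB_facts[OF t[unfolded te] assms] by blast
    then show "gB (fB a t) = t" using te by (simp add: fB_def gB_def insert_DiffM)
  qed
  show "\<forall>u\<in>U a b. fB a (gB u) = u"
  proof
    fix u assume u: "u \<in> U a b"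
    obtain c L' cs' where ue: "u = (c, L', cs')" by (cases u) auto
    have "pick a (add_mset c cs') = c" using U_facts u ue by blast
    then show "fB a (gB u) = u" using ue by (simp add: fB_def gB_def)
  qed
  show "fB a ` TB a b \<subseteq> U a b"
  proof
    fix p assume "p \<in> fB a ` TB a b"
    then obtain t where t: "t \<in> TB a b" "p = fB a t" by blast
    obtain L' cs' where te: "t = Node L' cs'" by (cases t)
    from TB_facts[OF t(1)[unfolded te] assms] obtain m where
      "a \<le> m" "m < b" "pick a cs' \<in> TT {a..m}" "(L', cs' - {#pick a cs'#}) \<in> Str {Suc m..b}" by blast
    then show "p \<in> U a b" using t(2) te by (auto simp: fB_def U_def)
  qed
  show "gB ` U a b \<subseteq> TB a b"
  proof
    fix t assume "t \<in> gB ` U a b"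
    then obtain u where u: "u \<in> U a b" "t = gB u" by blast
    obtain c L' cs' where ue: "u = (c, L', cs')" by (cases u) auto
    then show "t \<in> TB a b" using U_facts u by (simp add: gB_def)
  qed
qed

lemma TT_split: "TT {a..b} = TA a b \<union> TB a b" "TA a b \<inter> TB a b = {}"
  by (auto simp: TA_def TB_def)

lemma U_disj: "m \<in> {a..<b} \<Longrightarrow> m' \<in> {a..<b} \<Longrightarrow> m \<noteq> m' \<Longrightarrow>
   (TT {a..m} \<times> Str {Suc m..b}) \<inter> (TT {a..m'} \<times> Str {Suc m'..b}) = {}"
proof -
  assume h: "m \<in> {a..<b}" "m' \<in> {a..<b}" "m \<noteq> m'"
  have "TT {a..m} \<inter> TT {a..m'} = {}"
  proof (rule ccontr)
    assume "TT {a..m} \<inter> TT {a..m'} \<noteq> {}"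
    then obtain t where "t \<in> TT {a..m}" "t \<in> TT {a..m'}" by blast
    then have "{a..m} = {a..m'}" by (simp add: TT_def)
    then show False using h Icc_eq_Icc by auto
  qed
  then show ?thesis by blast
qed



lemma fin_Str: "finite (TT {x..y}) \<Longrightarrow> finite (Str {x..y})"
  using card_Str by blast

lemma fin_TT: "finite (TT {a..b})"
proof (induction "b - a" arbitrary: a b rule: less_induct)
  case less
  show ?case
  proof (cases "a \<le> b")
    case False
    then have "{a..b} = {}" by auto
    then show ?thesis by (simp add: TT_empty)
  next
    case ab: True
    have fTT: "finite (TT {x..y})" if "a \<le> x" "y \<le> b" "a < x \<or> y < b" for x y
    proof (cases "x \<le> y")
      case True
      then have "y - x < b - a" using that by auto
      then show ?thesis using less by blast
    next
      case False
      then have "{x..y} = {}" by auto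
      then show ?thesis by (simp add: TT_empty)
    qed
    have "finite (Str {Suc a..b})" using fTT[of "Suc a" b] by (intro fin_Str) auto
    then have fA: "finite (TA a b)" using bij_TA[OF ab] bij_betw_finite by blast
    have "finite (U a b)" unfolding U_def
    proof (rule finite_UN_I)
      show "finite {a..<b}" by simp
      fix m assume m: "m \<in> {a..<b}"
      have "finite (TT {a..m})" using fTT[of a m] m by auto
      moreover have "finite (Str {Suc m..b})" using fTT[of "Suc m" b] m by (intro fin_Str) auto
      ultimately show "finite (TT {a..m} \<times> Str {Suc m..b})" by blast
    qed
    then have fB: "finite (TB a b)" using bij_TB[OF ab] bij_betw_finite by blast
    show ?thesis using fA fB TT_split(1) by simp
  qed
qed

lemma card_rec: assumes ab: "a \<le> b"
  shows "card (TT {a..b}) = card (Str {Suc a..b}) + (\<Sum>m\<in>{a..<b}. card (TT {a..m}) * card (Str {Suc m..b}))"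
proof -
  have fA: "finite (TA a b)" and fB: "finite (TB a b)" using fin_TT TT_split(1)
    by (metis finite_Un)+
  have "card (TT {a..b}) = card (TA a b) + card (TB a b)"
    using card_Un_disjoint[OF fA fB TT_split(2)] TT_split(1) by simp
  moreover have "card (TA a b) = card (Str {Suc a..b})" using bij_TA[OF ab] bij_betw_same_card by blast
  moreover have "card (TB a b) = card (U a b)" using bij_TB[OF ab] bij_betw_same_card by blast
  moreover have "card (U a b) = (\<Sum>m\<in>{a..<b}. card (TT {a..m}) * card (Str {Suc m..b}))"
    unfolding U_def
  proof (subst card_UN_disjoint)
    show "finite {a..<b}" by simp
    show "\<forall>i\<in>{a..<b}. finite (TT {a..i} \<times> Str {Suc i..b})"
      using fin_TT fin_Str by blast
    show "\<forall>i\<in>{a..<b}. \<forall>j\<in>{a..<b}. i \<noteq> j \<longrightarrow>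
       (TT {a..i} \<times> Str {Suc i..b}) \<inter> (TT {a..j} \<times> Str {Suc j..b}) = {}"
      using U_disj by blast
    show "(\<Sum>i\<in>{a..<b}. card (TT {a..i} \<times> Str {Suc i..b})) =
      (\<Sum>m\<in>{a..<b}. card (TT {a..m}) * card (Str {Suc m..b}))"
      by (simp add: card_cartesian_product)
  qed
  ultimately show ?thesis by simp
qed

definition g :: "nat \<Rightarrow> nat" where "g k = card (TT {0..k})"

lemma card_TT_g: "x \<le> y \<Longrightarrow> card (TT {x..y}) = g (y - x)"
  using card_TT_shift[of x 0 "y - x"] by (simp add: g_def)

lemma card_Str_g: "card (Str {x..y}) = (if y < x then 1 else 2 * g (y - x))"
  using card_Str[OF fin_TT[of x y]] card_TT_g[of x y] by (auto simp: TT_empty)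

lemma g_rec: "g n = (if n = 0 then 1 else 2 * g (n - 1)) + (\<Sum>m<n. g m * (2 * g (n - Suc m)))"
proof -
  have "g n = card (TT {0..n})" by (simp add: g_def)
  also have "\<dots> = card (Str {Suc 0..n}) + (\<Sum>m\<in>{0..<n}. card (TT {0..m}) * card (Str {Suc m..n}))"
    by (rule card_rec) simp
  also have "card (Str {Suc 0..n}) = (if n = 0 then 1 else 2 * g (n - 1))"
    by (simp add: card_Str_g)
  also have "(\<Sum>m\<in>{0..<n}. card (TT {0..m}) * card (Str {Suc m..n})) = (\<Sum>m<n. g m * (2 * g (n - Suc m)))"
    by (rule sum.cong) (auto simp: card_Str_g g_def)
  finally show ?thesis .
qed

lemma r_g: "r n = (if n = 0 then 0 else g (n - 1))"
proof -
  have "{t \<in> rw_trees n. rec_labelled t} = TT {1..n}"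
    by (auto simp: rw_trees_def TT_def good_def)
  then have "r n = card (TT {1..n})" by (simp add: r_def)
  then show ?thesis using card_TT_g[of 1 n] TT_empty by (cases n) auto
qed

theorem mainTheorem7:
  fixes F :: "int fps"
  assumes "F = Abs_fps (\<lambda>n. if n = 0 then 0 else int (r n))"
  shows "F = fps_X + 2 * fps_X * F + 2 * F ^ 2"
proof -
  have Fn: "fps_nth F k = (if k = 0 then 0 else int (g (k - 1)))" for k
    using assms by (simp add: r_g)
  have rhs: "fps_X + 2 * fps_X * F + 2 * F ^ 2 = fps_X + fps_const 2 * (fps_X * F) + fps_const 2 * (F * F)"
    by (simp add: fps_numeral_fps_const power2_eq_square mult.assoc)
  show ?thesis
    unfolding rhs
  proof (rule fps_ext)
    fix k
    show "fps_nth F k = fps_nth (fps_X + fps_const 2 * (fps_X * F) + fps_const 2 * (F * F)) k"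
    proof (cases k)
      case 0 then show ?thesis by (simp add: Fn fps_mult_nth)
    next
      case (Suc n)
      have sq: "fps_nth (F * F) (Suc n) = (\<Sum>m<n. int (g m) * int (g (n - Suc m)))"
      proof -
        have "fps_nth (F * F) (Suc n) = (\<Sum>i=0..Suc n. fps_nth F i * fps_nth F (Suc n - i))" by (rule fps_mult_nth)
        also have "\<dots> = fps_nth F 0 * fps_nth F (Suc n) + (\<Sum>i=0..n. fps_nth F (Suc i) * fps_nth F (Suc n - Suc i))"
          by (subst sum.atLeast0_atMost_Suc_shift) simp
        also have "(\<Sum>i=0..n. fps_nth F (Suc i) * fps_nth F (Suc n - Suc i)) = (\<Sum>i<n. fps_nth F (Suc i) * fps_nth F (Suc n - Suc i)) + fps_nth F (Suc n) * fps_nth F 0"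
          by (simp add: atLeast0AtMost lessThan_Suc_atMost[symmetric])
        also have "(\<Sum>i<n. fps_nth F (Suc i) * fps_nth F (Suc n - Suc i)) = (\<Sum>m<n. int (g m) * int (g (n - Suc m)))"
          by (rule sum.cong) (auto simp: Fn Suc_diff_Suc)
        finally show ?thesis by (simp add: Fn)
      qed
      have "int (g n) = (if n = 0 then 1 else 2 * int (g (n - 1))) + 2 * (\<Sum>m<n. int (g m) * int (g (n - Suc m)))"
        by (subst g_rec) (simp add: sum_distrib_left mult.left_commute)
      then show ?thesis using Suc by (simp add: Fn sq)
    qed
  qed
qed


end
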